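(* Let $W\in\mathcal B(\ell^2)$ be the unilateral weighted shift with bounded positive weight sequence $\{w_n\}_{n\ge0}$ (i.e. $We_n=w_ne_{n+1}$), and let $k$ be a positive integer. The following are equivalent: (i) $W^k$ is left-invertible and $\|(W^k)'(W^k)^*x\|\le\|(W^k)'W^kx\|$ for all $x\in\ell^2$, where $(W^k)'=W^k(W^{*k}W^k)^{-1}$; (ii) $\inf_{n\in\mathbb Z_+}w_n>0$ and $\prod_{j=0}^{k-1}\frac{w_{n+j}}{w_{k+n+j}}\ge1$ for every integer $n\ge k$.
   Context: $\{e_n\}_{n\ge0}$ is the standard orthonormal basis of $\ell^2$ (square-summable sequences indexed by $\mathbb Z_+$). *)

theory Defs
  imports "HOL-Analysis.Analysis"
begin

text \<open>Operators are functions on sequences;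
  all properties are relativised to the carrier l2.\<close>

definition l2 :: "(nat \<Rightarrow> complex) set" where
  "l2 = {x. summable (\<lambda>n. (cmod (x n))\<^sup>2)}"

definition l2norm :: "(nat \<Rightarrow> complex) \<Rightarrow> real" where
  "l2norm x = sqrt (\<Sum>n. (cmod (x n))\<^sup>2)"

definition l2inner :: "(nat \<Rightarrow> complex) \<Rightarrow> (nat \<Rightarrow> complex) \<Rightarrow> complex" where
  "l2inner x y = (\<Sum>n. x n * cnj (y n))"

definition bounded_op :: "((nat \<Rightarrow> complex) \<Rightarrow> (nat \<Rightarrow> complex)) \<Rightarrow> bool" where
  "bounded_op T \<longleftrightarrow>
     (\<forall>x\<in>l2. T x \<in> l2) \<and>
     (\<forall>x\<in>l2. \<forall>y\<in>l2. \<forall>a b. T (\<lambda>n. a * x n + b * y n) = (\<lambda>n. a * T x n + b * T y n)) \<and>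
     (\<exists>C. \<forall>x\<in>l2. l2norm (T x) \<le> C * l2norm x)"

definition adj :: "((nat \<Rightarrow> complex) \<Rightarrow> (nat \<Rightarrow> complex)) \<Rightarrow> ((nat \<Rightarrow> complex) \<Rightarrow> (nat \<Rightarrow> complex))" where
  "adj T = (\<lambda>y. if y \<in> l2 then (THE z. z \<in> l2 \<and> (\<forall>x\<in>l2. l2inner (T x) y = l2inner x z)) else (\<lambda>_. 0))"

definition inv_op :: "((nat \<Rightarrow> complex) \<Rightarrow> (nat \<Rightarrow> complex)) \<Rightarrow> ((nat \<Rightarrow> complex) \<Rightarrow> (nat \<Rightarrow> complex))" where
  "inv_op A = (\<lambda>y. if y \<in> l2 then (THE z. z \<in> l2 \<and> A z = y) else (\<lambda>_. 0))"

definition left_invertible :: "((nat \<Rightarrow> complex) \<Rightarrow> (nat \<Rightarrow> complex)) \<Rightarrow> bool" where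
  "left_invertible T \<longleftrightarrow> (\<exists>S. bounded_op S \<and> (\<forall>x\<in>l2. S (T x) = x))"

text \<open>Unilateral weighted shift: W e_n = w_n e_(n+1).\<close>
definition wshift :: "(nat \<Rightarrow> real) \<Rightarrow> (nat \<Rightarrow> complex) \<Rightarrow> (nat \<Rightarrow> complex)" where
  "wshift w x = (\<lambda>n. if n = 0 then 0 else complex_of_real (w (n - 1)) * x (n - 1))"

end

theory Submission
  imports Defs
begin



lemma l2_iff: "x \<in> l2 \<longleftrightarrow> summable (\<lambda>n. (cmod (x n))\<^sup>2)"
  by (simp add: l2_def)

lemma l2_mult:
  assumes "x \<in> l2" "\<And>n. cmod (m n) \<le> B"
  shows "(\<lambda>n. m n * x n) \<in> l2"
proof -
  have "summable (\<lambda>n. B\<^sup>2 * (cmod (x n))\<^sup>2)" using assms(1) by (simp add: l2_iff summable_mult)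
  moreover have "norm ((cmod (m n * x n))\<^sup>2) \<le> B\<^sup>2 * (cmod (x n))\<^sup>2" for n
  proof -
    have "cmod (m n) * cmod (x n) \<le> B * cmod (x n)" using assms(2) by (simp add: mult_right_mono)
    hence "(cmod (m n) * cmod (x n))\<^sup>2 \<le> (B * cmod (x n))\<^sup>2"
      by (simp add: power_mono)
    thus ?thesis by (simp add: norm_mult power_mult_distrib)
  qed
  ultimately show ?thesis unfolding l2_iff using summable_comparison_test'[of "\<lambda>n. B\<^sup>2 * (cmod (x n))\<^sup>2" 0 "\<lambda>n. (cmod (m n * x n))\<^sup>2"] by blast
qed

lemma l2_shiftl: "x \<in> l2 \<Longrightarrow> (\<lambda>n. x (n + k)) \<in> l2"
  by (simp add: l2_iff summable_iff_shift[of "\<lambda>n. (cmod (x n))\<^sup>2" k])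

lemma l2_shiftr: "x \<in> l2 \<Longrightarrow> (\<lambda>n. if n < k then 0 else x (n - k)) \<in> l2"
proof -
  assume "x \<in> l2"
  hence "summable (\<lambda>n. (\<lambda>n. (cmod (if n < k then 0 else x (n - k)))\<^sup>2) (n + k))"
    by (simp add: l2_iff)
  thus ?thesis unfolding l2_iff by (rule summable_iff_shift[THEN iffD1])
qed

lemma l2_inner_summable:
  assumes "x \<in> l2" "y \<in> l2"
  shows "summable (\<lambda>n. x n * cnj (y n))"
proof (rule summable_norm_cancel, rule summable_comparison_test')
  show "summable (\<lambda>n. ((cmod (x n))\<^sup>2 + (cmod (y n))\<^sup>2) / 2)"
    using assms by (intro summable_divide summable_add) (auto simp: l2_iff)
  fix n :: nat
  have "cmod (x n) * cmod (y n) \<le> ((cmod (x n))\<^sup>2 + (cmod (y n))\<^sup>2) / 2"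
    using sum_squares_bound[of "cmod (x n)" "cmod (y n)"] by (simp add: power2_eq_square)
  thus "norm (norm (x n * cnj (y n))) \<le> ((cmod (x n))\<^sup>2 + (cmod (y n))\<^sup>2) / 2"
    by (simp add: norm_mult)
qed

definition e :: "nat \<Rightarrow> nat \<Rightarrow> complex" where "e j = (\<lambda>n. if n = j then 1 else 0)"

lemma suminf_single: "(\<Sum>n. if n = j then f j else 0) = (f j :: 'a::{t2_space,comm_monoid_add})"
proof -
  have "(\<lambda>n. if n = j then f n else 0) sums f j" by (rule sums_single)
  moreover have "(\<lambda>n. if n = j then f n else 0) = (\<lambda>n. if n = j then f j else 0)" by auto
  ultimately show ?thesis by (simp add: sums_unique[symmetric])
qed

lemma e_l2: "e j \<in> l2"
proof -
  have "(\<lambda>n. (cmod (e j n))\<^sup>2) = (\<lambda>n. if n = j then 1 else 0)" by (auto simp: e_def)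
  thus ?thesis unfolding l2_iff using summable_single[of j "\<lambda>_. 1::real"] by simp
qed

lemma l2norm_single: "l2norm (\<lambda>n. if n = j then c else 0) = cmod c"
proof -
  have "(\<lambda>n. (cmod (if n = j then c else 0))\<^sup>2) = (\<lambda>n. if n = j then (cmod c)\<^sup>2 else 0)" by auto
  thus ?thesis unfolding l2norm_def using suminf_single[of j "\<lambda>_. (cmod c)\<^sup>2"] by simp
qed

lemma inner_e: "l2inner (e j) z = cnj (z j)"
proof -
  have "(\<lambda>n. e j n * cnj (z n)) = (\<lambda>n. if n = j then cnj (z j) else 0)" by (auto simp: e_def)
  thus ?thesis unfolding l2inner_def using suminf_single[of j "\<lambda>_. cnj (z j)"] by simp
qed

lemma adj_unique:
  assumes "y \<in> l2" "z \<in> l2" "\<forall>x\<in>l2. l2inner (T x) y = l2inner x z"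
  shows "adj T y = z"
proof -
  have "(THE z. z \<in> l2 \<and> (\<forall>x\<in>l2. l2inner (T x) y = l2inner x z)) = z"
  proof (rule the_equality)
    show "z \<in> l2 \<and> (\<forall>x\<in>l2. l2inner (T x) y = l2inner x z)" using assms by blast
    fix z' assume h: "z' \<in> l2 \<and> (\<forall>x\<in>l2. l2inner (T x) y = l2inner x z')"
    show "z' = z"
    proof
      fix n
      have "l2inner (T (e n)) y = l2inner (e n) z'" using h e_l2 by blast
      moreover have "l2inner (T (e n)) y = l2inner (e n) z" using assms(3) e_l2 by blast
      ultimately have "l2inner (e n) z' = l2inner (e n) z" by simp
      thus "z' n = z n" by (simp add: inner_e)
    qed
  qed
  thus ?thesis using assms(1) by (simp add: adj_def)
qed

lemma inv_unique:
  assumes "y \<in> l2" "z \<in> l2" "A z = y" "\<And>z'. z' \<in> l2 \<Longrightarrow> A z' = y \<Longrightarrow> z' = z"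
  shows "inv_op A y = z"
proof -
  have "(THE z. z \<in> l2 \<and> A z = y) = z"
  proof (rule the_equality)
    show "z \<in> l2 \<and> A z = y" using assms(2,3) by blast
    show "\<And>z'. z' \<in> l2 \<and> A z' = y \<Longrightarrow> z' = z" using assms(4) by blast
  qed
  thus ?thesis using assms(1) by (simp add: inv_op_def)
qed

lemma l2norm_shiftr:
  assumes "x \<in> l2"
  shows "l2norm (\<lambda>n. if n < k then 0 else x (n - k)) = l2norm x"
proof -
  let ?f = "\<lambda>n. (cmod (if n < k then 0 else x (n - k)))\<^sup>2"
  have "summable ?f" using l2_shiftr[OF assms] by (simp add: l2_iff)
  hence "suminf ?f = (\<Sum>n. ?f (n + k)) + (\<Sum>i<k. ?f i)" by (rule suminf_split_initial_segment)
  thus ?thesis by (simp add: l2norm_def)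
qed

lemma l2norm_shiftl:
  assumes "x \<in> l2"
  shows "l2norm (\<lambda>n. x (n + k)) \<le> l2norm x"
proof -
  let ?f = "\<lambda>n. (cmod (x n))\<^sup>2"
  have "summable ?f" using assms by (simp add: l2_iff)
  hence "suminf ?f = (\<Sum>n. ?f (n + k)) + (\<Sum>i<k. ?f i)" by (rule suminf_split_initial_segment)
  moreover have "(\<Sum>i<k. ?f i) \<ge> 0" by (intro sum_nonneg) auto
  ultimately show ?thesis by (simp add: l2norm_def)
qed

lemma l2norm_mult:
  assumes "x \<in> l2" "\<And>n. cmod (m n) \<le> B"
  shows "l2norm (\<lambda>n. m n * x n) \<le> B * l2norm x"
proof -
  have B0: "B \<ge> 0" using assms(2)[of 0] norm_ge_zero order_trans by blast
  have "(\<Sum>n. (cmod (m n * x n))\<^sup>2) \<le> (\<Sum>n. B\<^sup>2 * (cmod (x n))\<^sup>2)"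
  proof (rule suminf_le)
    fix n
    have "cmod (m n) * cmod (x n) \<le> B * cmod (x n)" using assms(2) by (simp add: mult_right_mono)
    hence "(cmod (m n) * cmod (x n))\<^sup>2 \<le> (B * cmod (x n))\<^sup>2"
      by (simp add: power_mono)
    thus "(cmod (m n * x n))\<^sup>2 \<le> B\<^sup>2 * (cmod (x n))\<^sup>2" by (simp add: norm_mult power_mult_distrib)
    show "summable (\<lambda>n. (cmod (m n * x n))\<^sup>2)" using l2_mult[OF assms] by (simp add: l2_iff)
    show "summable (\<lambda>n. B\<^sup>2 * (cmod (x n))\<^sup>2)" using assms(1) by (simp add: l2_iff summable_mult)
  qed
  also have "\<dots> = B\<^sup>2 * (\<Sum>n. (cmod (x n))\<^sup>2)" using assms(1) by (simp add: l2_iff suminf_mult)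
  finally have "sqrt (\<Sum>n. (cmod (m n * x n))\<^sup>2) \<le> sqrt (B\<^sup>2 * (\<Sum>n. (cmod (x n))\<^sup>2))"
    by (rule real_sqrt_le_mono)
  moreover have "sqrt (B\<^sup>2 * (\<Sum>n. (cmod (x n))\<^sup>2)) = B * sqrt (\<Sum>n. (cmod (x n))\<^sup>2)"
    using B0 by (simp add: real_sqrt_mult)
  ultimately show ?thesis unfolding l2norm_def by linarith
qed




definition wp :: "(nat \<Rightarrow> real) \<Rightarrow> nat \<Rightarrow> nat \<Rightarrow> real" where
  "wp w m i = (\<Prod>j<m. w (i + j))"

lemma wp_0[simp]: "wp w 0 i = 1" by (simp add: wp_def)

lemma wp_Suc: "wp w (Suc m) i = wp w m i * w (i + m)" by (simp add: wp_def)

lemma wp_Suc': "wp w (Suc m) i = w i * wp w m (Suc i)"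
  unfolding wp_def prod.lessThan_Suc_shift by simp

lemma wshift_apply: "wshift w y n = (if n = 0 then 0 else complex_of_real (w (n - 1)) * y (n - 1))"
  by (simp add: wshift_def)

lemma Wpow: "(wshift w ^^ m) x = (\<lambda>n. if n < m then 0 else complex_of_real (wp w m (n - m)) * x (n - m))"
proof (induction m)
  case 0
  show ?case by simp
next
  case (Suc m)
  show ?case
  proof
    fix n
    show "(wshift w ^^ Suc m) x n = (if n < Suc m then 0 else complex_of_real (wp w (Suc m) (n - Suc m)) * x (n - Suc m))"
    proof (cases n)
      case 0
      then show ?thesis by (simp add: wshift_apply)
    next
      case (Suc n')
      have "(wshift w ^^ Suc m) x n = wshift w ((wshift w ^^ m) x) n" by simp
      also have "\<dots> = complex_of_real (w n') * (wshift w ^^ m) x n'" using Suc by (simp add: wshift_apply)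
      also have "\<dots> = complex_of_real (w n') * (if n' < m then 0 else complex_of_real (wp w m (n' - m)) * x (n' - m))"
        unfolding Suc.IH ..
      also have "\<dots> = (if n < Suc m then 0 else complex_of_real (wp w (Suc m) (n - Suc m)) * x (n - Suc m))"
      proof (cases "n' < m")
        case False
        then have "n' - m + m = n'" by simp
        then show ?thesis using Suc False by (simp add: wp_Suc mult_ac)
      qed (use Suc in simp)
      finally show ?thesis .
    qed
  qed
qed

context
  fixes w :: "nat \<Rightarrow> real" and M :: real
  assumes wpos: "\<forall>n. w n > 0" and wM: "\<forall>n. w n \<le> M"
begin

lemma wp_pos: "wp w m i > 0"
  unfolding wp_def using wpos by (intro prod_pos) auto

lemma wp_le: "wp w m i \<le> M ^ m"
proof -
  have "wp w m i \<le> (\<Prod>j<m. M)" unfolding wp_def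
    using wpos wM by (intro prod_mono) (auto intro: less_imp_le)
  thus ?thesis by simp
qed

lemma cmod_wp: "cmod (complex_of_real (wp w m i)) \<le> M ^ m"
  using wp_le wp_pos[of m i] by simp

lemma Wpow_l2: "x \<in> l2 \<Longrightarrow> (wshift w ^^ m) x \<in> l2"
  unfolding Wpow
  using l2_shiftr[OF l2_mult[of x "\<lambda>i. complex_of_real (wp w m i)" "M ^ m"], of m] cmod_wp
  by blast

lemma adj_Wpow:
  assumes y: "y \<in> l2"
  shows "adj (wshift w ^^ m) y = (\<lambda>n. complex_of_real (wp w m n) * y (n + m))"
proof (rule adj_unique[OF y])
  show "(\<lambda>n. complex_of_real (wp w m n) * y (n + m)) \<in> l2"
    using l2_mult[OF l2_shiftl[OF y, of m], of "\<lambda>i. complex_of_real (wp w m i)" "M ^ m"] cmod_wp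
    by blast
  show "\<forall>x\<in>l2. l2inner ((wshift w ^^ m) x) y = l2inner x (\<lambda>n. complex_of_real (wp w m n) * y (n + m))"
  proof
    fix x assume x: "x \<in> l2"
    let ?g = "\<lambda>n. (wshift w ^^ m) x n * cnj (y n)"
    have "summable ?g" by (rule l2_inner_summable[OF Wpow_l2[OF x] y])
    hence "suminf ?g = (\<Sum>n. ?g (n + m)) + (\<Sum>i<m. ?g i)" by (rule suminf_split_initial_segment)
    moreover have "(\<Sum>i<m. ?g i) = 0" by (simp add: Wpow)
    moreover have "(\<lambda>n. ?g (n + m)) = (\<lambda>n. x n * cnj (complex_of_real (wp w m n) * y (n + m)))"
      by (simp add: Wpow mult_ac)
    ultimately show "l2inner ((wshift w ^^ m) x) y = l2inner x (\<lambda>n. complex_of_real (wp w m n) * y (n + m))"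
      unfolding l2inner_def by simp
  qed
qed

lemma adjW: "y \<in> l2 \<Longrightarrow> adj (wshift w) y = (\<lambda>n. complex_of_real (w n) * y (Suc n))"
  using adj_Wpow[of y 1] by (simp add: wp_def)

lemma adjW_pow: "y \<in> l2 \<Longrightarrow> (adj (wshift w) ^^ m) y = (\<lambda>n. complex_of_real (wp w m n) * y (n + m))"
proof (induction m)
  case 0
  then show ?case by simp
next
  case (Suc m)
  have l: "(\<lambda>n. complex_of_real (wp w m n) * y (n + m)) \<in> l2"
    using l2_mult[OF l2_shiftl[OF Suc.prems, of m], of "\<lambda>i. complex_of_real (wp w m i)" "M ^ m"] cmod_wp
    by blast
  have "(adj (wshift w) ^^ Suc m) y = adj (wshift w) ((adj (wshift w) ^^ m) y)" by simp
  also have "\<dots> = adj (wshift w) (\<lambda>n. complex_of_real (wp w m n) * y (n + m))"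
    using Suc by simp
  also have "\<dots> = (\<lambda>n. complex_of_real (wp w (Suc m) n) * y (n + Suc m))"
    using adjW[OF l] by (simp add: wp_Suc' mult_ac)
  finally show ?case .
qed

end



lemma ofr_cancel1: "r \<noteq> 0 \<Longrightarrow> complex_of_real (1 / r) * (complex_of_real r * v) = v"
  by (simp add: mult.assoc[symmetric] flip: of_real_mult)

lemma ofr_cancel2: "r \<noteq> 0 \<Longrightarrow> complex_of_real r * (complex_of_real (1 / r) * v) = v"
  by (simp add: mult.assoc[symmetric] flip: of_real_mult)

lemma ofr_cancel3: "(r::real) \<noteq> 0 \<Longrightarrow> complex_of_real r * (complex_of_real (1 / r\<^sup>2) * v) = complex_of_real (1 / r) * v"
  by (simp add: field_simps power2_eq_square)

context
  fixes w :: "nat \<Rightarrow> real" and M :: real and k :: nat and c :: real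
  assumes wpos: "\<forall>n. w n > 0" and wM: "\<forall>n. w n \<le> M"
    and c0: "c > 0" and ac: "\<forall>n. wp w k n \<ge> c"
begin

lemma apos: "wp w k n > 0" using wp_pos[OF wpos wM] .
lemma anz: "wp w k n \<noteq> 0" using apos[of n] by simp

lemma A_apply: "z \<in> l2 \<Longrightarrow> ((adj (wshift w) ^^ k) \<circ> (wshift w ^^ k)) z
     = (\<lambda>n. complex_of_real ((wp w k n)\<^sup>2) * z n)"
  using adjW_pow[OF wpos wM Wpow_l2[OF wpos wM]]
  by (simp add: Wpow power2_eq_square mult_ac)

lemma inv_A:
  assumes y: "y \<in> l2"
  shows "inv_op ((adj (wshift w) ^^ k) \<circ> (wshift w ^^ k)) y = (\<lambda>n. complex_of_real (1 / (wp w k n)\<^sup>2) * y n)"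
proof (rule inv_unique[OF y])
  have b: "cmod (complex_of_real (1 / (wp w k n)\<^sup>2)) \<le> 1 / c\<^sup>2" for n
  proof -
    have "c\<^sup>2 \<le> (wp w k n)\<^sup>2" using ac c0 by (intro power_mono) (auto intro: less_imp_le)
    hence "1 / (wp w k n)\<^sup>2 \<le> 1 / c\<^sup>2" using c0 by (intro frac_le) auto
    thus ?thesis by (simp add: norm_divide norm_power)
  qed
  show l: "(\<lambda>n. complex_of_real (1 / (wp w k n)\<^sup>2) * y n) \<in> l2"
    using l2_mult[OF y, of "\<lambda>n. complex_of_real (1 / (wp w k n)\<^sup>2)" "1 / c\<^sup>2"] b by blast
  show "((adj (wshift w) ^^ k) \<circ> (wshift w ^^ k)) (\<lambda>n. complex_of_real (1 / (wp w k n)\<^sup>2) * y n) = y"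
    unfolding A_apply[OF l] using ofr_cancel2[of "(wp w k _)\<^sup>2"] anz by simp
  fix z' assume z': "z' \<in> l2" "((adj (wshift w) ^^ k) \<circ> (wshift w ^^ k)) z' = y"
  show "z' = (\<lambda>n. complex_of_real (1 / (wp w k n)\<^sup>2) * y n)"
  proof
    fix n
    have "y n = complex_of_real ((wp w k n)\<^sup>2) * z' n" using z' A_apply[OF z'(1)] by metis
    thus "z' n = complex_of_real (1 / (wp w k n)\<^sup>2) * y n"
      using ofr_cancel1[of "(wp w k n)\<^sup>2" "z' n"] anz by simp
  qed
qed

lemma T_apply:
  assumes v: "v \<in> l2"
  shows "((wshift w ^^ k) \<circ> inv_op ((adj (wshift w) ^^ k) \<circ> (wshift w ^^ k))) v
    = (\<lambda>n. if n < k then 0 else complex_of_real (1 / wp w k (n - k)) * v (n - k))"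
  unfolding o_apply inv_A[OF v] Wpow by (simp only: ofr_cancel3[OF anz])

lemma LHS:
  assumes x: "x \<in> l2"
  shows "((wshift w ^^ k) \<circ> inv_op ((adj (wshift w) ^^ k) \<circ> (wshift w ^^ k))) (adj (wshift w ^^ k) x)
    = (\<lambda>n. if n < k then 0 else x n)"
proof -
  have l: "(\<lambda>n. complex_of_real (wp w k n) * x (n + k)) \<in> l2"
    using l2_mult[OF l2_shiftl[OF x, of k], of "\<lambda>i. complex_of_real (wp w k i)" "M ^ k"] cmod_wp[OF wpos wM]
    by blast
  show ?thesis
    unfolding adj_Wpow[OF wpos wM x] T_apply[OF l] by (rule ext) (simp add: anz field_simps)
qed

definition "rr n = wp w k n / wp w k (n + k)"

lemma rr_bound: "cmod (complex_of_real (rr n)) \<le> M ^ k / c"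
proof -
  have "M \<ge> w 0" using wM by simp
  hence "M \<ge> 0" using wpos by (meson less_imp_le order_trans)
  hence "rr n \<le> M ^ k / c" unfolding rr_def using wp_le[OF wpos wM] ac c0
    by (intro frac_le) (auto intro: less_imp_le)
  moreover have "rr n > 0" unfolding rr_def using apos by simp
  ultimately show ?thesis by simp
qed

lemma RHS:
  assumes x: "x \<in> l2"
  shows "l2norm (((wshift w ^^ k) \<circ> inv_op ((adj (wshift w) ^^ k) \<circ> (wshift w ^^ k))) ((wshift w ^^ k) x))
    = l2norm (\<lambda>n. complex_of_real (rr n) * x n)"
proof -
  have l1: "(\<lambda>n. complex_of_real (rr n) * x n) \<in> l2"
    using l2_mult[OF x, of "\<lambda>n. complex_of_real (rr n)"] rr_bound by blast
  have l2: "(\<lambda>m. if m < k then 0 else complex_of_real (rr (m - k)) * x (m - k)) \<in> l2"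
    using l2_shiftr[OF l1, of k] .
  have eq: "((wshift w ^^ k) \<circ> inv_op ((adj (wshift w) ^^ k) \<circ> (wshift w ^^ k))) ((wshift w ^^ k) x)
    = (\<lambda>n. if n < k then 0 else (\<lambda>m. if m < k then 0 else complex_of_real (rr (m - k)) * x (m - k)) (n - k))"
  proof -
    have rrk: "rr (m - (k + k)) = wp w k (m - (k + k)) / wp w k (m - k)" if "\<not> m - k < k" for m
    proof -
      have "m - (k + k) + k = m - k" using that by simp
      thus ?thesis unfolding rr_def by simp
    qed
    show ?thesis unfolding T_apply[OF Wpow_l2[OF wpos wM x]] unfolding Wpow
      by (rule ext) (auto simp: rrk anz field_simps)
  qed
  show ?thesis unfolding eq l2norm_shiftr[OF l2] l2norm_shiftr[OF l1] ..
qed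

lemma rr_prod: "rr n = (\<Prod>j<k. w (n + j) / w (k + n + j))"
  unfolding rr_def wp_def prod_dividef by (simp add: add_ac)

lemma ineq_iff:
  "(\<forall>x\<in>l2.
      l2norm (((wshift w ^^ k) \<circ> inv_op ((adj (wshift w) ^^ k) \<circ> (wshift w ^^ k))) (adj (wshift w ^^ k) x))
    \<le> l2norm (((wshift w ^^ k) \<circ> inv_op ((adj (wshift w) ^^ k) \<circ> (wshift w ^^ k))) ((wshift w ^^ k) x)))
   \<longleftrightarrow> (\<forall>n\<ge>k. (\<Prod>j<k. w (n + j) / w (k + n + j)) \<ge> 1)"
proof
  assume H: "\<forall>x\<in>l2.
      l2norm (((wshift w ^^ k) \<circ> inv_op ((adj (wshift w) ^^ k) \<circ> (wshift w ^^ k))) (adj (wshift w ^^ k) x))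
    \<le> l2norm (((wshift w ^^ k) \<circ> inv_op ((adj (wshift w) ^^ k) \<circ> (wshift w ^^ k))) ((wshift w ^^ k) x))"
  show "\<forall>n\<ge>k. (\<Prod>j<k. w (n + j) / w (k + n + j)) \<ge> 1"
  proof (intro allI impI)
    fix n assume n: "k \<le> n"
    note H[rule_format, OF e_l2[of n]]
    hence "l2norm (\<lambda>m. if m < k then 0 else e n m) \<le> l2norm (\<lambda>m. complex_of_real (rr m) * e n m)"
      unfolding LHS[OF e_l2[of n]] RHS[OF e_l2[of n]] .
    moreover have "(\<lambda>m. if m < k then 0 else e n m) = (\<lambda>m. if m = n then 1 else 0)"
      using n by (auto simp: e_def)
    moreover have "(\<lambda>m. complex_of_real (rr m) * e n m) = (\<lambda>m. if m = n then complex_of_real (rr n) else 0)"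
      by (auto simp: e_def)
    moreover have rp: "rr n > 0" unfolding rr_def using apos by simp
    ultimately have "1 \<le> cmod (complex_of_real (rr n))" by (simp only: l2norm_single norm_one)
    hence "1 \<le> rr n" using rp by simp
    thus "(\<Prod>j<k. w (n + j) / w (k + n + j)) \<ge> 1" by (simp add: rr_prod)
  qed
next
  assume H: "\<forall>n\<ge>k. (\<Prod>j<k. w (n + j) / w (k + n + j)) \<ge> 1"
  hence H': "\<And>n. n \<ge> k \<Longrightarrow> rr n \<ge> 1" by (simp add: rr_prod)
  show "\<forall>x\<in>l2.
      l2norm (((wshift w ^^ k) \<circ> inv_op ((adj (wshift w) ^^ k) \<circ> (wshift w ^^ k))) (adj (wshift w ^^ k) x))
    \<le> l2norm (((wshift w ^^ k) \<circ> inv_op ((adj (wshift w) ^^ k) \<circ> (wshift w ^^ k))) ((wshift w ^^ k) x))"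
  proof
    fix x assume x: "x \<in> l2"
    have l1: "(\<lambda>n. complex_of_real (rr n) * x n) \<in> l2"
      using l2_mult[OF x, of "\<lambda>n. complex_of_real (rr n)"] rr_bound by blast
    have "(\<Sum>n. (cmod (if n < k then 0 else x n))\<^sup>2) \<le> (\<Sum>n. (cmod (complex_of_real (rr n) * x n))\<^sup>2)"
    proof (rule suminf_le)
      fix n
      show "(cmod (if n < k then 0 else x n))\<^sup>2 \<le> (cmod (complex_of_real (rr n) * x n))\<^sup>2"
      proof (cases "n < k")
        case False
        hence r1: "rr n \<ge> 1" using H' by simp
        have "cmod (x n) \<le> rr n * cmod (x n)" using r1 by (simp add: mult_right_mono[of 1 "rr n" "cmod (x n)", simplified])
        hence "(cmod (x n))\<^sup>2 \<le> (rr n * cmod (x n))\<^sup>2" by (intro power_mono) auto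
        moreover have "cmod (complex_of_real (rr n) * x n) = rr n * cmod (x n)" using r1 by (simp add: norm_mult)
        ultimately show ?thesis using False by simp
      qed simp
      show "summable (\<lambda>n. (cmod (if n < k then 0 else x n))\<^sup>2)"
        using summable_comparison_test'[of "\<lambda>n. (cmod (x n))\<^sup>2" 0 "\<lambda>n. (cmod (if n < k then 0 else x n))\<^sup>2"] x
        unfolding l2_iff by auto
      show "summable (\<lambda>n. (cmod (complex_of_real (rr n) * x n))\<^sup>2)" using l1 unfolding l2_iff .
    qed
    hence "l2norm (\<lambda>n. if n < k then 0 else x n) \<le> l2norm (\<lambda>n. complex_of_real (rr n) * x n)"
      unfolding l2norm_def by (rule real_sqrt_le_mono)
    thus "l2norm (((wshift w ^^ k) \<circ> inv_op ((adj (wshift w) ^^ k) \<circ> (wshift w ^^ k))) (adj (wshift w ^^ k) x))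
      \<le> l2norm (((wshift w ^^ k) \<circ> inv_op ((adj (wshift w) ^^ k) \<circ> (wshift w ^^ k))) ((wshift w ^^ k) x))"
      unfolding LHS[OF x] RHS[OF x] .
  qed
qed

end



lemma inf_lower_a:
  assumes wpos: "\<forall>n. w n > 0" and I: "(INF n. w n) > (0::real)"
  shows "\<forall>n. wp w k n \<ge> (INF n. w n) ^ k" "(INF n. w n) ^ k > 0"
proof -
  have bdd: "bdd_below (range w)" using wpos by (intro bdd_belowI[of _ 0]) (auto intro: less_imp_le)
  have lw: "(INF n. w n) \<le> w n" for n by (rule cINF_lower[OF bdd]) simp
  show "\<forall>n. wp w k n \<ge> (INF n. w n) ^ k"
  proof
    fix n
    have "(\<Prod>j<k. (INF n. w n)) \<le> wp w k n" unfolding wp_def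
      using lw I by (intro prod_mono) (auto intro: less_imp_le)
    thus "wp w k n \<ge> (INF n. w n) ^ k" by simp
  qed
  show "(INF n. w n) ^ k > 0" using I by simp
qed

lemma LI_of_bound:
  assumes wpos: "\<forall>n. w n > 0" and wM: "\<forall>n. w n \<le> M" and c0: "c > 0" and ac: "\<forall>n. wp w k n \<ge> c"
  shows "left_invertible (wshift w ^^ k)"
proof -
  define S where "S = (\<lambda>y::nat \<Rightarrow> complex. \<lambda>n. complex_of_real (1 / wp w k n) * y (n + k))"
  have b: "cmod (complex_of_real (1 / wp w k n)) \<le> 1 / c" for n
  proof -
    have "1 / wp w k n \<le> 1 / c" using ac c0 by (intro frac_le) auto
    moreover have "wp w k n > 0" using wp_pos[OF wpos wM] .
    moreover have "cmod (complex_of_real (1 / wp w k n)) = \<bar>1 / wp w k n\<bar>" by (rule norm_of_real)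
    ultimately show ?thesis by simp
  qed
  have "bounded_op S"
    unfolding bounded_op_def
  proof (intro conjI ballI allI)
    fix x :: "nat \<Rightarrow> complex" assume x: "x \<in> l2"
    show "S x \<in> l2" unfolding S_def
      using l2_mult[OF l2_shiftl[OF x, of k], of "\<lambda>n. complex_of_real (1 / wp w k n)" "1 / c"] b by blast
  next
    fix x y :: "nat \<Rightarrow> complex" and a b :: complex
    show "S (\<lambda>n. a * x n + b * y n) = (\<lambda>n. a * S x n + b * S y n)"
      unfolding S_def by (simp add: algebra_simps)
  next
    show "\<exists>C. \<forall>x\<in>l2. l2norm (S x) \<le> C * l2norm x"
    proof (intro exI ballI)
      fix x assume x: "x \<in> l2"
      have "l2norm (S x) \<le> 1 / c * l2norm (\<lambda>n. x (n + k))" unfolding S_def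
        using l2norm_mult[OF l2_shiftl[OF x, of k], of "\<lambda>n. complex_of_real (1 / wp w k n)" "1 / c"] b by blast
      also have "\<dots> \<le> 1 / c * l2norm x" using l2norm_shiftl[OF x, of k] c0 by (intro mult_left_mono) auto
      finally show "l2norm (S x) \<le> 1 / c * l2norm x" .
    qed
  qed
  moreover have "\<forall>x\<in>l2. S ((wshift w ^^ k) x) = x"
  proof
    fix x :: "nat \<Rightarrow> complex"
    show "S ((wshift w ^^ k) x) = x"
    proof (rule ext)
      fix n
      have nz: "wp w k n \<noteq> 0" using wp_pos[OF wpos wM, of k n] by simp
      have "S ((wshift w ^^ k) x) n = complex_of_real (1 / wp w k n) * (complex_of_real (wp w k n) * x n)"
        unfolding S_def Wpow by simp
      also have "\<dots> = x n" by (rule ofr_cancel1[OF nz])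
      finally show "S ((wshift w ^^ k) x) n = x n" .
    qed
  qed
  ultimately show ?thesis unfolding left_invertible_def by blast
qed

lemma bound_of_LI:
  assumes wpos: "\<forall>n. w n > 0" and wM: "\<forall>n. w n \<le> M" and k: "k > 0"
    and LI: "left_invertible (wshift w ^^ k)"
  shows "(INF n. w n) > 0"
proof -
  obtain S where S: "bounded_op S" "\<forall>x\<in>l2. S ((wshift w ^^ k) x) = x"
    using LI unfolding left_invertible_def by blast
  obtain C where C: "\<forall>x\<in>l2. l2norm (S x) \<le> C * l2norm x" using S(1) unfolding bounded_op_def by blast
  have M0: "M > 0" using wM wpos by (meson less_le_trans)
  have aj: "1 \<le> C * wp w k j" for j
  proof -
    have l: "(\<lambda>i. complex_of_real (wp w k i) * e j i) \<in> l2"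
      using l2_mult[OF e_l2[of j], of "\<lambda>i. complex_of_real (wp w k i)" "M ^ k"] cmod_wp[OF wpos wM] by blast
    have eq: "(\<lambda>i. complex_of_real (wp w k i) * e j i) = (\<lambda>i. if i = j then complex_of_real (wp w k j) else 0)"
      by (auto simp: e_def)
    have "l2norm ((wshift w ^^ k) (e j)) = l2norm (\<lambda>i. complex_of_real (wp w k i) * e j i)"
      unfolding Wpow by (rule l2norm_shiftr[OF l])
    also have "\<dots> = wp w k j" unfolding eq l2norm_single using wp_pos[OF wpos wM, of k j] by simp
    finally have n1: "l2norm ((wshift w ^^ k) (e j)) = wp w k j" .
    have "e j = (\<lambda>i. if i = j then 1 else 0)" by (simp add: e_def)
    hence n2: "l2norm (e j) = 1" using l2norm_single[of j 1] by simp
    have "l2norm (S ((wshift w ^^ k) (e j))) \<le> C * l2norm ((wshift w ^^ k) (e j))"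
      using C Wpow_l2[OF wpos wM e_l2] by blast
    moreover have "S ((wshift w ^^ k) (e j)) = e j" using S(2) e_l2[of j] by blast
    ultimately show ?thesis using n1 n2 by simp
  qed
  have C0: "C > 0"
  proof (rule ccontr)
    assume "\<not> C > 0"
    hence "C * wp w k 0 \<le> 0" using wp_pos[OF wpos wM, of k 0] by (simp add: mult_nonpos_nonneg)
    thus False using aj[of 0] by simp
  qed
  obtain k' where k': "k = Suc k'" using k by (cases k) auto
  have lb: "1 / (C * M ^ k') \<le> w j" for j
  proof -
    have "wp w k j = w j * wp w k' (Suc j)" unfolding k' by (rule wp_Suc')
    also have "\<dots> \<le> w j * M ^ k'" using wp_le[OF wpos wM] wpos by (intro mult_left_mono) (auto intro: less_imp_le)
    finally have "C * wp w k j \<le> C * (w j * M ^ k')" using C0 by (intro mult_left_mono) auto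
    hence "1 \<le> C * (w j * M ^ k')" using aj[of j] by linarith
    hence "1 \<le> w j * (C * M ^ k')" by (simp add: mult_ac)
    moreover have "C * M ^ k' > 0" using C0 M0 by simp
    ultimately show ?thesis by (simp add: pos_divide_le_eq)
  qed
  have "1 / (C * M ^ k') \<le> (INF n. w n)" by (rule cINF_greatest) (use lb in auto)
  moreover have "1 / (C * M ^ k') > 0" using C0 M0 by simp
  ultimately show ?thesis by linarith
qed

theorem proposition3p1:
  fixes w :: "nat \<Rightarrow> real" and k :: nat
  assumes wpos: "\<forall>n. w n > 0"
    and wbdd: "\<exists>M. \<forall>n. w n \<le> M"
    and kpos: "k > 0"
  shows "(left_invertible (wshift w ^^ k) \<and>
          (\<forall>x\<in>l2.
             l2norm (((wshift w ^^ k) \<circ> inv_op ((adj (wshift w) ^^ k) \<circ> (wshift w ^^ k)))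
                        (adj (wshift w ^^ k) x))
           \<le> l2norm (((wshift w ^^ k) \<circ> inv_op ((adj (wshift w) ^^ k) \<circ> (wshift w ^^ k)))
                        ((wshift w ^^ k) x))))
     \<longleftrightarrow>
         ((INF n. w n) > 0 \<and>
          (\<forall>n\<ge>k. (\<Prod>j<k. w (n + j) / w (k + n + j)) \<ge> 1))"
proof -
  obtain M where wM: "\<forall>n. w n \<le> M" using wbdd by blast
  show ?thesis
  proof
    assume H: "left_invertible (wshift w ^^ k) \<and>
          (\<forall>x\<in>l2.
             l2norm (((wshift w ^^ k) \<circ> inv_op ((adj (wshift w) ^^ k) \<circ> (wshift w ^^ k)))
                        (adj (wshift w ^^ k) x))
           \<le> l2norm (((wshift w ^^ k) \<circ> inv_op ((adj (wshift w) ^^ k) \<circ> (wshift w ^^ k)))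
                        ((wshift w ^^ k) x)))"
    have I: "(INF n. w n) > 0" using bound_of_LI[OF wpos wM kpos] H by blast
    note ab = inf_lower_a[OF wpos I, of k]
    show "(INF n. w n) > 0 \<and> (\<forall>n\<ge>k. (\<Prod>j<k. w (n + j) / w (k + n + j)) \<ge> 1)"
      using I H ineq_iff[OF wpos wM ab(2) ab(1)] by blast
  next
    assume H: "(INF n. w n) > 0 \<and> (\<forall>n\<ge>k. (\<Prod>j<k. w (n + j) / w (k + n + j)) \<ge> 1)"
    hence I: "(INF n. w n) > 0" by blast
    note ab = inf_lower_a[OF wpos I, of k]
    show "left_invertible (wshift w ^^ k) \<and>
          (\<forall>x\<in>l2.
             l2norm (((wshift w ^^ k) \<circ> inv_op ((adj (wshift w) ^^ k) \<circ> (wshift w ^^ k)))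
                        (adj (wshift w ^^ k) x))
           \<le> l2norm (((wshift w ^^ k) \<circ> inv_op ((adj (wshift w) ^^ k) \<circ> (wshift w ^^ k)))
                        ((wshift w ^^ k) x)))"
      using LI_of_bound[OF wpos wM ab(2) ab(1)] H ineq_iff[OF wpos wM ab(2) ab(1)] by blast
  qed
qed


end
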